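(* Let $a\in\{0,\dots,m\}$, $b\in\{0,\dots,n\}$. For each $k=1,\dots,p$ write the dominant of $\boldsymbol A_k\sqcup\boldsymbol B_k$ as $0=c^{(k)}_{a+b}<c^{(k)}_{a+b-1}+1<\dots<c^{(k)}_{a+b-j}+j<\dots<c^{(k)}_1+a+b-1$ (this defines integers $c^{(k)}_1,\dots,c^{(k)}_{a+b}$), let $\tilde z_k=z_k+\lambda^{(k)}_{m+1}h$ and $\mathscr T_i(x)=\prod_{k=1}^p\prod_{j=1}^{c^{(k)}_i}(x-\tilde z_k+jh)$. Then \[\pi_{a,b}\prod_{j=1}^a\mathscr T_j[j]=\prod_{i=1}^a\big(T_{m-a+i}[b+i]\,T_{m+1}[i-1]\big).\]
   Context: Fix $h\in\mathbb{C}^\times$; $f[i](x)=f(x-ih)$. Polynomial $\mathfrak{gl}_{m|n}$ weights: $\lambda\in\mathbb{Z}^{m+n}_{\ge0}$, $\lambda_1\ge\dots\ge\lambda_m$, $\lambda_{m+1}\ge\dots\ge\lambda_{m+n}$, $\lambda_{m+k}=0$ for $k>\lambda_m$. Let $\boldsymbol\lambda=(\lambda^{(1)},\dots,\lambda^{(p)})$ be polynomial weights and $\boldsymbol z=(z_1,\dots,z_p)$ $h$-generic ($z_i-z_j\notin h\mathbb{Z}$, $i\ne j$). $T_i(x)=\prod_{k=1}^p\prod_{j=1}^{\lambda^{(k)}_i}(x-z_k+s_ijh)$ with $s_i=1$ for $i\le m$ and $s_i=-1$ for $i>m$. $\pi_{a,b}(x)=\prod_{k=1}^p\prod_{i=1}^a\prod_{j=1}^{\min\{b,\lambda^{(k)}_{m-i+1}\}}(x-z_k+(i+j-a-b-1)h)$.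 For each $k$: $\boldsymbol A_k=\{\lambda^{(k)}_{m-r+1}+\lambda^{(k)}_{m+1}+r-1\}_{r=1}^a$ and $\boldsymbol B_k=\{\lambda^{(k)}_{m+1}-\lambda^{(k)}_{m+r}+r-1\}_{r=1}^b$. Partitions with $r$ parts are weakly increasing sequences of nonnegative integers (multisets are sorted into partitions, $\sqcup$ is multiset union); $\boldsymbol b$ dominates $\boldsymbol a$ if $b_i\ge a_i$ for all $i$; the dominant of $\boldsymbol a$ is the smallest (with respect to dominance) partition with $r$ distinct parts dominating $\boldsymbol a$. *)

theory Defs
  imports Complex_Main
begin

text \<open>A weight lambda in Z^(m+n) is a function nat => nat, with entries lambda_1..lambda_(m+n),
  extended by zero outside {1..m+n}.\<close>
definition poly_weight :: "nat \<Rightarrow> nat \<Rightarrow> (nat \<Rightarrow> nat) \<Rightarrow> bool" where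
  "poly_weight m n lam \<longleftrightarrow>
     (\<forall>i. (i = 0 \<or> i > m + n) \<longrightarrow> lam i = 0) \<and>
     (\<forall>i j. 1 \<le> i \<and> i \<le> j \<and> j \<le> m \<longrightarrow> lam j \<le> lam i) \<and>
     (\<forall>i j. m + 1 \<le> i \<and> i \<le> j \<and> j \<le> m + n \<longrightarrow> lam j \<le> lam i) \<and>
     (0 < m \<longrightarrow> (\<forall>k. 1 \<le> k \<and> k \<le> n \<and> k > lam m \<longrightarrow> lam (m + k) = 0))"

definition h_generic :: "complex \<Rightarrow> nat \<Rightarrow> (nat \<Rightarrow> complex) \<Rightarrow> bool" where
  "h_generic h p z \<longleftrightarrow>
     (\<forall>i\<in>{1..p}. \<forall>j\<in>{1..p}. i \<noteq> j \<longrightarrow> (\<forall>t::int. z i - z j \<noteq> of_int t * h))"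

text \<open>Shift: f[i](x) = f(x - i h).\<close>
definition shift :: "complex \<Rightarrow> (complex \<Rightarrow> complex) \<Rightarrow> int \<Rightarrow> complex \<Rightarrow> complex" where
  "shift h f i x = f (x - of_int i * h)"

definition sgn_idx :: "nat \<Rightarrow> nat \<Rightarrow> int" where
  "sgn_idx m i = (if i \<le> m then 1 else -1)"

definition T_poly :: "nat \<Rightarrow> complex \<Rightarrow> nat \<Rightarrow> (nat \<Rightarrow> nat \<Rightarrow> nat) \<Rightarrow> (nat \<Rightarrow> complex)
    \<Rightarrow> nat \<Rightarrow> complex \<Rightarrow> complex" where
  "T_poly m h p lam z i x =
     (\<Prod>k=1..p. \<Prod>j=1..lam k i. (x - z k + of_int (sgn_idx m i) * of_nat j * h))"

definition pi_poly :: "nat \<Rightarrow> complex \<Rightarrow> nat \<Rightarrow> (nat \<Rightarrow> nat \<Rightarrow> nat) \<Rightarrow> (nat \<Rightarrow> complex)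
    \<Rightarrow> nat \<Rightarrow> nat \<Rightarrow> complex \<Rightarrow> complex" where
  "pi_poly m h p lam z a b x =
     (\<Prod>k=1..p. \<Prod>i=1..a. \<Prod>j=1..min b (lam k (m - i + 1)).
        (x - z k + of_int (int i + int j - int a - int b - 1) * h))"

text \<open>Partitions: weakly increasing lists of naturals; dominance is componentwise.\<close>
definition dominates :: "nat list \<Rightarrow> nat list \<Rightarrow> bool" where
  "dominates bs as \<longleftrightarrow> length bs = length as \<and> (\<forall>i < length as. as ! i \<le> bs ! i)"

definition dominant :: "nat list \<Rightarrow> nat list" where
  "dominant as = (THE d. sorted_wrt (<) d \<and> dominates d as \<and>
      (\<forall>e. sorted_wrt (<) e \<and> dominates e as \<longrightarrow> dominates e d))"

definition A_list :: "nat \<Rightarrow> (nat \<Rightarrow> nat) \<Rightarrow> nat \<Rightarrow> nat list" where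
  "A_list m lam a = map (\<lambda>r. lam (m - r + 1) + lam (m + 1) + r - 1) [1..<a+1]"

definition B_list :: "nat \<Rightarrow> (nat \<Rightarrow> nat) \<Rightarrow> nat \<Rightarrow> nat list" where
  "B_list m lam b = map (\<lambda>r. (lam (m + 1) - lam (m + r)) + r - 1) [1..<b+1]"

text \<open>The dominant d (0-indexed, increasing) satisfies d!j = c_(a+b-j) + j.\<close>
definition c_coef :: "nat \<Rightarrow> (nat \<Rightarrow> nat) \<Rightarrow> nat \<Rightarrow> nat \<Rightarrow> nat \<Rightarrow> nat" where
  "c_coef m lam a b i =
     (let d = dominant (sort (A_list m lam a @ B_list m lam b)) in d ! (a + b - i) - (a + b - i))"

definition calT :: "nat \<Rightarrow> complex \<Rightarrow> nat \<Rightarrow> (nat \<Rightarrow> nat \<Rightarrow> nat) \<Rightarrow> (nat \<Rightarrow> complex)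
    \<Rightarrow> nat \<Rightarrow> nat \<Rightarrow> nat \<Rightarrow> complex \<Rightarrow> complex" where
  "calT m h p lam z a b i x =
     (\<Prod>k=1..p. \<Prod>j=1..c_coef m (lam k) a b i.
        (x - (z k + of_nat (lam k (m + 1)) * h) + of_nat j * h))"

end

theory Submission
  imports Defs
begin

definition greedy :: "nat list \<Rightarrow> nat list" where
  "greedy xs = map (\<lambda>j. Max ((\<lambda>k. xs!k + j - k) ` {..j})) [0..<length xs]"

lemma strict_nth_gap:
  assumes "sorted_wrt (<) (e::nat list)" "k \<le> j" "j < length e"
  shows "e!k + (j - k) \<le> e!j"
  using assms(2,3)
proof (induction j)
  case 0 then show ?case by simp
next
  case (Suc j)
  show ?case
  proof (cases "k = Suc j")
    case True then show ?thesis by simp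
  next
    case False
    then have "k \<le> j" using Suc by simp
    then have "e!k + (j - k) \<le> e!j" using Suc by simp
    moreover have "e!j < e!Suc j" using assms(1) Suc.prems
      by (simp add: sorted_wrt_iff_nth_less)
    ultimately show ?thesis using \<open>k \<le> j\<close> by linarith
  qed
qed

lemma greedy_nth:
  "j < length xs \<Longrightarrow> greedy xs ! j = Max ((\<lambda>k. xs!k + j - k) ` {..j})"
  by (simp add: greedy_def)

lemma greedy_ge: "k \<le> j \<Longrightarrow> j < length xs \<Longrightarrow> xs!k + j - k \<le> greedy xs ! j"
  by (simp add: greedy_nth)

lemma greedy_props:
  "sorted_wrt (<) (greedy xs) \<and> dominates (greedy xs) xs \<and>
   (\<forall>e. sorted_wrt (<) e \<and> dominates e xs \<longrightarrow> dominates e (greedy xs))"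
proof (intro conjI allI impI)
  show "sorted_wrt (<) (greedy xs)"
  proof (subst sorted_wrt_iff_nth_less, intro allI impI)
    fix i j assume ij: "i < j" "j < length (greedy xs)"
    then have jl: "j < length xs" by (simp add: greedy_def)
    have "finite ((\<lambda>k. xs!k + i - k) ` {..i})" "(\<lambda>k. xs!k + i - k) ` {..i} \<noteq> {}" by auto
    have "Max ((\<lambda>k. xs!k + i - k) ` {..i}) \<in> (\<lambda>k. xs!k + i - k) ` {..i}"
      by (rule Max_in) auto
    then obtain k where k0: "k \<in> {..i}" "Max ((\<lambda>k. xs!k + i - k) ` {..i}) = xs!k + i - k"
      by (rule imageE)
    have "greedy xs ! i = Max ((\<lambda>k. xs!k + i - k) ` {..i})" using ij jl by (simp add: greedy_nth)
    with k0 have k: "k \<le> i" "greedy xs ! i = xs!k + i - k" by auto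
    have "xs!k + j - k \<le> greedy xs ! j" using k ij jl by (intro greedy_ge) auto
    then show "greedy xs ! i < greedy xs ! j" using k ij by linarith
  qed
  show "dominates (greedy xs) xs"
    unfolding dominates_def
  proof (intro conjI allI impI)
    fix i assume "i < length xs"
    then show "xs!i \<le> greedy xs ! i" using greedy_ge[of i i xs] by simp
  qed (simp add: greedy_def)
  fix e assume e: "sorted_wrt (<) e \<and> dominates e xs"
  show "dominates e (greedy xs)"
    unfolding dominates_def
  proof (intro conjI allI impI)
    show "length e = length (greedy xs)" using e by (simp add: dominates_def greedy_def)
    fix j assume j: "j < length (greedy xs)"
    then have jl: "j < length xs" by (simp add: greedy_def)
    have "\<forall>k\<in>{..j}. xs!k + j - k \<le> e!j"
    proof
      fix k assume "k \<in> {..j}"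
      then have "k \<le> j" by simp
      have "e!k + (j - k) \<le> e!j" using strict_nth_gap[of e k j] e \<open>k \<le> j\<close> jl
        by (simp add: dominates_def)
      moreover have "xs!k \<le> e!k" using e \<open>k \<le> j\<close> jl by (simp add: dominates_def)
      ultimately show "xs!k + j - k \<le> e!j" using \<open>k \<le> j\<close> by linarith
    qed
    then show "greedy xs ! j \<le> e!j" using jl by (simp add: greedy_nth)
  qed
qed

lemma dominant_greedy: "dominant xs = greedy xs"
  unfolding dominant_def
proof (rule the_equality)
  show "sorted_wrt (<) (greedy xs) \<and> dominates (greedy xs) xs \<and>
   (\<forall>e. sorted_wrt (<) e \<and> dominates e xs \<longrightarrow> dominates e (greedy xs))"
    by (rule greedy_props)
  fix d assume d: "sorted_wrt (<) d \<and> dominates d xs \<and>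
      (\<forall>e. sorted_wrt (<) e \<and> dominates e xs \<longrightarrow> dominates e d)"
  have 1: "dominates d (greedy xs)" using d greedy_props by blast
  have 2: "dominates (greedy xs) d" using d greedy_props by blast
  show "d = greedy xs"
    using 1 2 by (intro nth_equalityI) (auto simp: dominates_def intro: order.antisym)
qed

lemma sorted_cnt_le:
  assumes "sorted (e::nat list)" "k < length e"
  shows "length (filter (\<lambda>x. x < e!k) e) \<le> k"
proof -
  have "{i. i < length e \<and> e!i < e!k} \<subseteq> {..<k}"
  proof
    fix i assume "i \<in> {i. i < length e \<and> e!i < e!k}"
    then have "i < length e" "e!i < e!k" by auto
    then show "i \<in> {..<k}" using assms sorted_nth_mono[of e k i] by (cases "k \<le> i") auto
  qed
  then have "card {i. i < length e \<and> e!i < e!k} \<le> k"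
    by (metis card_lessThan card_mono finite_lessThan)
  then show ?thesis by (simp add: length_filter_conv_card)
qed

lemma sorted_cnt_ge:
  assumes "sorted (e::nat list)" "v \<in> set e"
  shows "length (filter (\<lambda>x. x < v) e) < length e \<and> v \<le> e ! length (filter (\<lambda>x. x < v) e)"
proof
  define c where "c = length (filter (\<lambda>x. x < v) e)"
  show cl: "c < length e" unfolding c_def using assms(2)
    by (intro length_filter_less) auto
  show "v \<le> e ! c"
  proof (rule ccontr)
    assume "\<not> v \<le> e!c"
    then have lt: "e!c < v" by simp
    have "{..c} \<subseteq> {i. i < length e \<and> e!i < v}"
    proof
      fix i assume "i \<in> {..c}"
      then have "i \<le> c" by simp
      then have "e!i \<le> e!c" using assms(1) cl sorted_nth_mono by blast
      then show "i \<in> {i. i < length e \<and> e!i < v}" using lt \<open>i \<le> c\<close> cl by auto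
    qed
    then have "card {..c} \<le> card {i. i < length e \<and> e!i < v}"
      by (intro card_mono) auto
    then have "Suc c \<le> c" by (simp add: length_filter_conv_card c_def)
    then show False by simp
  qed
qed

lemma length_filter_map_upt:
  "length (filter P (map f [1..<a+1])) = card {r\<in>{1..a}. P (f r)}"
proof -
  have "length (filter P (map f [1..<a+1])) = length (filter (P \<circ> f) [1..<a+1])"
    by (simp add: filter_map)
  also have "\<dots> = card (set (filter (P \<circ> f) [1..<a+1]))"
    by (metis distinct_card distinct_filter distinct_upt)
  also have "set (filter (P \<circ> f) [1..<a+1]) = {r\<in>{1..a}. P (f r)}"
    by auto
  finally show ?thesis .
qed

lemma length_filter_sort: "length (filter P (sort xs)) = length (filter P xs)"
  by (metis filter_sort length_sort)

lemma pw_mu: "poly_weight m n lam \<Longrightarrow> 1 \<le> i' \<Longrightarrow> i' \<le> i \<Longrightarrow> i \<le> m \<Longrightarrow>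
   lam (m - i' + 1) \<le> lam (m - i + 1)"
proof -
  assume "poly_weight m n lam" "1 \<le> i'" "i' \<le> i" "i \<le> m"
  then have H: "\<forall>i j. 1 \<le> i \<and> i \<le> j \<and> j \<le> m \<longrightarrow> lam j \<le> lam i"
    unfolding poly_weight_def by blast
  have "m - i + 1 \<le> m - i' + 1" "m - i' + 1 \<le> m" "1 \<le> m - i + 1"
    using \<open>1 \<le> i'\<close> \<open>i' \<le> i\<close> \<open>i \<le> m\<close> by arith+
  then show ?thesis using H by blast
qed

lemma pw_nu: "poly_weight m n lam \<Longrightarrow> 1 \<le> r' \<Longrightarrow> r' \<le> r \<Longrightarrow> r \<le> n \<Longrightarrow>
   lam (m + r) \<le> lam (m + r')"
proof -
  assume "poly_weight m n lam" "1 \<le> r'" "r' \<le> r" "r \<le> n"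
  then have H: "\<forall>i j. m + 1 \<le> i \<and> i \<le> j \<and> j \<le> m + n \<longrightarrow> lam j \<le> lam i"
    unfolding poly_weight_def by blast
  show ?thesis using H[rule_format, of "m + r'" "m + r"] \<open>1 \<le> r'\<close> \<open>r' \<le> r\<close> \<open>r \<le> n\<close> by auto
qed

lemma pw_zero: "poly_weight m n lam \<Longrightarrow> 0 < m \<Longrightarrow> 1 \<le> r \<Longrightarrow> r \<le> n \<Longrightarrow> lam m < r \<Longrightarrow>
   lam (m + r) = 0"
  unfolding poly_weight_def by auto

lemma card_le_iv: "S \<subseteq> {1..q::nat} \<Longrightarrow> card S \<le> q"
  using card_mono[of "{1..q}" S] by simp

lemma card_ge_iv: "{1..q::nat} \<subseteq> S \<Longrightarrow> finite S \<Longrightarrow> q \<le> card S"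
  using card_mono[of S "{1..q}"] by simp

lemma ar1: "(X::nat) \<le> Y \<Longrightarrow> 1 \<le> i \<Longrightarrow> i - 1 + min b (X + i - 1) \<le> C \<Longrightarrow>
   X + l + i - 1 + (b + t) \<le> l + t + max b Y + C"
  by (cases "b \<le> X + i - 1"; cases "b \<le> Y") (simp_all add: min_def max_def)

lemma ar2: "(C::nat) \<le> b + t \<Longrightarrow> 1 \<le> i \<Longrightarrow> \<not> i \<le> t + 1 \<Longrightarrow> i - 1 + min b (X + i - 1) \<le> C \<Longrightarrow>
   X + l + i - 1 + (b + t) \<le> l + t + max b Y + C"
  by (cases "b \<le> X + i - 1"; cases "b \<le> Y") (simp_all add: min_def max_def)

lemma D_value:
  fixes lam :: "nat \<Rightarrow> nat"
  assumes pw: "poly_weight m n lam" and am: "a \<le> m" and bn: "b \<le> n" and ta: "t < a"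
  shows "greedy (sort (A_list m lam a @ B_list m lam b)) ! (b + t)
         = lam (m + 1) + t + max b (lam (m - t))"
proof -
  define l where "l = lam (m + 1)"
  define Af where "Af = (\<lambda>r. lam (m - r + 1) + lam (m + 1) + r - 1)"
  define Bf where "Bf = (\<lambda>r. (lam (m + 1) - lam (m + r)) + r - 1)"
  define e where "e = sort (A_list m lam a @ B_list m lam b)"
  define j where "j = b + t"
  have Al: "A_list m lam a = map Af [1..<a+1]" by (simp add: A_list_def Af_def)
  have Bl: "B_list m lam b = map Bf [1..<b+1]" by (simp add: B_list_def Bf_def)
  have se: "sorted e" by (simp add: e_def)
  have le: "length e = a + b" by (simp add: e_def A_list_def B_list_def)
  have jl: "j < length e" using ta le j_def by simp
  have sete: "set e = Af ` {1..a} \<union> Bf ` {1..b}"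
    by (auto simp: e_def Al Bl)
  define cnt where "cnt = (\<lambda>v. length (filter (\<lambda>x. x < v) e))"
  have cnt_eq: "cnt v = card {r\<in>{1..a}. Af r < v} + card {r\<in>{1..b}. Bf r < v}" for v
    unfolding cnt_def e_def length_filter_sort Al Bl filter_append length_append
      length_filter_map_upt by simp
  have m1: "1 \<le> m" using ta am by simp
  have mu_mono: "lam (m - i' + 1) \<le> lam (m - i + 1)" if "1 \<le> i'" "i' \<le> i" "i \<le> a" for i i'
    using pw_mu[OF pw that(1,2)] that am by simp
  have nu_le: "lam (m + r) \<le> l" if "1 \<le> r" "r \<le> b" for r
    using pw_nu[OF pw order.refl that(1)] that bn l_def by simp
  have nu_mono: "lam (m + r) \<le> lam (m + r')" if "1 \<le> r'" "r' \<le> r" "r \<le> b" for r r'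
    using pw_nu[OF pw that(1,2)] that bn by simp
  have Af_mono: "Af i' < Af i" if "1 \<le> i'" "i' < i" "i \<le> a" for i i'
    using mu_mono[of i' i] that unfolding Af_def by simp
  have Bf_mono: "Bf r' < Bf r" if "1 \<le> r'" "r' < r" "r \<le> b" for r r'
    using nu_mono[of r' r] nu_le[of r] nu_le[of r'] that unfolding Bf_def l_def by simp
  have Bf_le: "Bf r + 1 \<le> l + r" if "1 \<le> r" "r \<le> b" for r
    using nu_le[of r] that unfolding Bf_def l_def by simp
  have ub: "e!k + j - k \<le> l + t + max b (lam (m - t))" if kj: "k \<le> j" for k
  proof -
    have kl: "k < length e" using kj jl by simp
    define v where "v = e!k"
    have vin: "v \<in> set e" using kl v_def by simp
    have ck: "cnt v \<le> k" using sorted_cnt_le[OF se kl] by (simp add: cnt_def v_def)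
    have "v + j \<le> l + t + max b (lam (m - t)) + cnt v"
    proof (cases "v \<in> Af ` {1..a}")
      case True
      then obtain i where i: "1 \<le> i" "i \<le> a" "v = Af i" by auto
      define q where "q = min b (lam (m - i + 1) + i - 1)"
      have "{1..i-1} \<subseteq> {r\<in>{1..a}. Af r < v}" using Af_mono i by auto
      then have c1: "i - 1 \<le> card {r\<in>{1..a}. Af r < v}"
        by (intro card_ge_iv) auto
      have "{1..q} \<subseteq> {r\<in>{1..b}. Bf r < v}"
      proof
        fix r assume "r \<in> {1..q}"
        then have r: "1 \<le> r" "r \<le> b" "r \<le> lam (m - i + 1) + i - 1" by (auto simp: q_def)
        have "Bf r + 1 \<le> l + r" using Bf_le r by simp
        then show "r \<in> {r\<in>{1..b}. Bf r < v}" using r i unfolding Af_def l_def by auto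
      qed
      then have c2: "q \<le> card {r\<in>{1..b}. Bf r < v}"
        by (intro card_ge_iv) auto
      have cge: "i - 1 + q \<le> cnt v" using c1 c2 cnt_eq by simp
      have vA: "v = lam (m - i + 1) + l + i - 1" using i Af_def l_def by simp
      show ?thesis
      proof (cases "i \<le> t + 1")
        case True
        then have "lam (m - i + 1) \<le> lam (m - (t + 1) + 1)" using mu_mono[of i "t+1"] i ta by simp
        moreover have "m - (t + 1) + 1 = m - t" using ta am by simp
        ultimately have "lam (m - i + 1) \<le> lam (m - t)" by simp
        then show ?thesis using cge vA i unfolding q_def j_def
          using ar1[of "lam (m - i + 1)" "lam (m - t)" i b "cnt v" l t] by simp
      next
        case False
        have "cnt v \<le> b + t" using ck kj j_def by simp
        then show ?thesis using cge vA i False unfolding q_def j_def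
          using ar2[of "cnt v" b t i "lam (m - i + 1)" l "lam (m - t)"] by simp
      qed
    next
      case False
      then have "v \<in> Bf ` {1..b}" using vin sete by auto
      then obtain r where r: "1 \<le> r" "r \<le> b" "v = Bf r" by auto
      have "{1..r-1} \<subseteq> {r'\<in>{1..b}. Bf r' < v}" using Bf_mono r by auto
      then have c1: "r - 1 \<le> card {r'\<in>{1..b}. Bf r' < v}"
        by (intro card_ge_iv) auto
      have "r - 1 \<le> cnt v" using c1 cnt_eq by simp
      moreover have "v + 1 \<le> l + r" using Bf_le r by simp
      ultimately show ?thesis unfolding j_def using r by simp
    qed
    then show ?thesis using ck kj v_def by simp
  qed
  have lb: "e!c + j - c \<le> greedy e ! j" if "c \<le> j" for c
    using greedy_ge[OF that jl] .
  have lb1: "l + t + lam (m - t) \<le> greedy e ! j"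
  proof -
    define v where "v = Af (t+1)"
    have vin: "v \<in> set e" using sete ta v_def by auto
    note g = sorted_cnt_ge[OF se vin]
    have "{r\<in>{1..a}. Af r < v} \<subseteq> {1..t}"
    proof
      fix r assume "r \<in> {r\<in>{1..a}. Af r < v}"
      then have r: "1 \<le> r" "r \<le> a" "Af r < v" by auto
      show "r \<in> {1..t}"
      proof (rule ccontr)
        assume "r \<notin> {1..t}"
        then have "t + 1 \<le> r" using r by auto
        then show False using Af_mono[of "t+1" r] r v_def by (cases "t + 1 = r") auto
      qed
    qed
    then have "card {r\<in>{1..a}. Af r < v} \<le> t" by (rule card_le_iv)
    moreover have "card {r\<in>{1..b}. Bf r < v} \<le> b"
      by (intro card_le_iv) auto
    ultimately have cj: "cnt v \<le> j" using cnt_eq j_def by simp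
    have "v \<le> e ! cnt v" using g cnt_def by simp
    then have "v \<le> greedy e ! j" using lb[OF cj] cj by simp
    moreover have st: "Suc (m - Suc t) = m - t" using ta am by simp
    moreover have "v = l + t + lam (m - t)" using v_def Af_def l_def by (simp add: st)
    ultimately show ?thesis by simp
  qed
  have lb2: "l + t + b \<le> greedy e ! j"
  proof -
    define v where "v = Af 1"
    have vin: "v \<in> set e" using sete ta v_def by auto
    note g = sorted_cnt_ge[OF se vin]
    have "{r\<in>{1..a}. Af r < v} = {}"
    proof (rule ccontr)
      assume "{r\<in>{1..a}. Af r < v} \<noteq> {}"
      then obtain r where r: "1 \<le> r" "r \<le> a" "Af r < Af 1" using v_def by auto
      show False
      proof (cases "r = 1")
        case True then show False using r by simp
      next
        case False then show False using Af_mono[of 1 r] r by simp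
      qed
    qed
    then have 0: "card {r\<in>{1..a}. Af r < v} = 0" by simp
    have "{r\<in>{1..b}. Bf r < v} \<subseteq> {1..min b (lam m)}"
    proof
      fix r assume "r \<in> {r\<in>{1..b}. Bf r < v}"
      then have r: "1 \<le> r" "r \<le> b" "Bf r < v" by auto
      show "r \<in> {1..min b (lam m)}"
      proof (rule ccontr)
        assume "r \<notin> {1..min b (lam m)}"
        then have "lam m < r" using r by auto
        then have "lam (m + r) = 0" using pw_zero[OF pw _ r(1)] m1 r bn by simp
        moreover have "Suc (m - Suc 0) = m" using m1 by simp
        ultimately show False using r \<open>lam m < r\<close> unfolding v_def Af_def Bf_def by simp
      qed
    qed
    then have "card {r\<in>{1..b}. Bf r < v} \<le> min b (lam m)"
      by (rule card_le_iv)
    then have cb: "cnt v \<le> min b (lam m)" using cnt_eq[of v] unfolding 0 by simp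
    then have cj: "cnt v \<le> j" using j_def by simp
    have "v \<le> e ! cnt v" using g cnt_def by simp
    then have "v + j - cnt v \<le> greedy e ! j" using lb[OF cj] cj by simp
    moreover have "v = lam m + l" using v_def Af_def l_def m1 by (simp add: Suc_diff_Suc)
    ultimately show ?thesis using cb j_def by arith
  qed
  have "greedy e ! j = Max ((\<lambda>k. e!k + j - k) ` {..j})" using greedy_nth[OF jl] .
  also have "\<dots> = l + t + max b (lam (m - t))"
  proof (rule order.antisym)
    show "Max ((\<lambda>k. e!k + j - k) ` {..j}) \<le> l + t + max b (lam (m - t))"
      using ub by (subst Max_le_iff) auto
    show "l + t + max b (lam (m - t)) \<le> Max ((\<lambda>k. e!k + j - k) ` {..j})"
      using lb1 lb2 greedy_nth[OF jl] by (simp add: max_def)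
  qed
  finally show ?thesis unfolding e_def j_def l_def .
qed

lemma c_coef_val:
  assumes pw: "poly_weight m n lam" and am: "a \<le> m" and bn: "b \<le> n" and i: "1 \<le> i" "i \<le> a"
  shows "c_coef m lam a b i = lam (m + 1) + max b (lam (m - a + i)) - b"
proof -
  have ta: "a - i < a" using i by simp
  have 1: "b + (a - i) = a + b - i" using i by simp
  have 2: "m - (a - i) = m - a + i" using i am by simp
  show ?thesis
    using D_value[OF pw am bn ta] i unfolding c_coef_def Let_def dominant_greedy 1 2
    by (simp add: max_def)
qed

lemma prod_shift_up:
  fixes f :: "int \<Rightarrow> 'a::comm_monoid_mult"
  shows "(\<Prod>j=1..c. f (u + int j)) = (\<Prod>t\<in>{u<..u + int c}. f t)"
  by (rule prod.reindex_bij_witness[of _ "\<lambda>t. nat (t - u)" "\<lambda>j. u + int j"]) auto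

lemma prod_shift_down:
  fixes f :: "int \<Rightarrow> 'a::comm_monoid_mult"
  shows "(\<Prod>j=1..c. f (u - int j)) = (\<Prod>t\<in>{u - int c - 1<..u - 1}. f t)"
  by (rule prod.reindex_bij_witness[of _ "\<lambda>t. nat (u - t)" "\<lambda>j. u - int j"]) auto

lemma prod_split_ivl:
  fixes f :: "int \<Rightarrow> 'a::comm_monoid_mult"
  assumes "\<alpha> \<le> \<beta>" "\<beta> \<le> \<gamma>"
  shows "(\<Prod>t\<in>{\<alpha><..\<gamma>}. f t) = (\<Prod>t\<in>{\<alpha><..\<beta>}. f t) * (\<Prod>t\<in>{\<beta><..\<gamma>}. f t)"
proof -
  have "{\<alpha><..\<gamma>} = {\<alpha><..\<beta>} \<union> {\<beta><..\<gamma>}" using assms by auto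
  then show ?thesis by (simp add: prod.union_disjoint ivl_disj_int)
qed

lemma key:
  fixes f :: "int \<Rightarrow> 'a::comm_monoid_mult" and B L l :: nat and u :: int
  shows "(\<Prod>t\<in>{u - B<..u - B + min B L}. f t) * (\<Prod>t\<in>{u - l<..u - B + max B L}. f t)
       = (\<Prod>t\<in>{u - B<..u - B + L}. f t) * (\<Prod>t\<in>{u - l<..u}. f t)"
proof (cases "L \<le> B")
  case True
  then show ?thesis by (simp add: min_def max_def)
next
  case False
  then have mn: "min B L = B" "max B L = L" by auto
  have s1: "(\<Prod>t\<in>{u - l<..u - B + L}. f t) = (\<Prod>t\<in>{u - l<..u}. f t) * (\<Prod>t\<in>{u<..u - B + L}. f t)"
    using False by (intro prod_split_ivl) auto
  have s2: "(\<Prod>t\<in>{u - B<..u - B + L}. f t) = (\<Prod>t\<in>{u - B<..u}. f t) * (\<Prod>t\<in>{u<..u - B + L}. f t)"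
    using False by (intro prod_split_ivl) auto
  show ?thesis unfolding mn s1 s2 by (simp add: ac_simps)
qed

theorem proposition6p5:
  fixes m n p a b :: nat and h :: complex
    and lam :: "nat \<Rightarrow> nat \<Rightarrow> nat" and z :: "nat \<Rightarrow> complex"
  assumes "h \<noteq> 0"
    and "\<forall>k\<in>{1..p}. poly_weight m n (lam k)"
    and "h_generic h p z"
    and "a \<le> m" and "b \<le> n"
  shows "\<forall>x. pi_poly m h p lam z a b x *
             (\<Prod>j=1..a. shift h (calT m h p lam z a b j) (int j) x)
           = (\<Prod>i=1..a. shift h (T_poly m h p lam z (m - a + i)) (int (b + i)) x *
                        shift h (T_poly m h p lam z (m + 1)) (int i - 1) x)"
proof
  fix x
  define Fp where "Fp = (\<lambda>k i. \<Prod>j=1..min b (lam k (m - i + 1)).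
        (x - z k + of_int (int i + int j - int a - int b - 1) * h))"
  define Gc where "Gc = (\<lambda>k i. \<Prod>j=1..c_coef m (lam k) a b i.
        (x - of_int (int i) * h - (z k + of_nat (lam k (m + 1)) * h) + of_nat j * h))"
  define T1 where "T1 = (\<lambda>k i. \<Prod>j=1..lam k (m - a + i).
        (x - of_int (int (b + i)) * h - z k + of_int (sgn_idx m (m - a + i)) * of_nat j * h))"
  define T2 where "T2 = (\<lambda>k i. \<Prod>j=1..lam k (m + 1).
        (x - of_int (int i - 1) * h - z k + of_int (sgn_idx m (m + 1)) * of_nat j * h))"
  have piE: "pi_poly m h p lam z a b x = (\<Prod>k=1..p. \<Prod>i=1..a. Fp k i)"
    unfolding pi_poly_def Fp_def ..
  also have "\<dots> = (\<Prod>k=1..p. \<Prod>i=1..a. Fp k (a + 1 - i))"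
    by (intro prod.cong refl prod.reindex_bij_witness[of _ "\<lambda>i. a + 1 - i" "\<lambda>i. a + 1 - i"]) auto
  finally have pi2: "pi_poly m h p lam z a b x = (\<Prod>k=1..p. \<Prod>i=1..a. Fp k (a + 1 - i))" .
  have cE: "(\<Prod>j=1..a. shift h (calT m h p lam z a b j) (int j) x) = (\<Prod>k=1..p. \<Prod>i=1..a. Gc k i)"
    unfolding shift_def calT_def Gc_def by (rule prod.swap)
  have rE: "(\<Prod>i=1..a. shift h (T_poly m h p lam z (m - a + i)) (int (b + i)) x *
                        shift h (T_poly m h p lam z (m + 1)) (int i - 1) x)
          = (\<Prod>k=1..p. \<Prod>i=1..a. T1 k i * T2 k i)"
    unfolding shift_def T_poly_def T1_def T2_def
    by (simp add: prod.distrib[symmetric]) (rule prod.swap)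
  have per: "Fp k (a + 1 - i) * Gc k i = T1 k i * T2 k i" if k: "k \<in> {1..p}" and i: "i \<in> {1..a}" for k i
  proof -
    have pw: "poly_weight m n (lam k)" using assms(2) k by blast
    have i1: "1 \<le> i" "i \<le> a" using i by auto
    define L where "L = lam k (m - a + i)"
    define l where "l = lam k (m + 1)"
    define f where "f = (\<lambda>t::int. x - z k + of_int t * h)"
    define u where "u = - int i"
    have cc: "c_coef m (lam k) a b i = l + max b L - b"
      using c_coef_val[OF pw assms(4,5) i1] L_def l_def by simp
    have e1: "Fp k (a + 1 - i) = (\<Prod>t\<in>{u - b<..u - b + min b L}. f t)"
    proof -
      have "m - (a + 1 - i) + 1 = m - a + i" using i1 assms(4) by simp
      then have "Fp k (a + 1 - i) = (\<Prod>j=1..min b L. f ((u - b) + int j))"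
        unfolding Fp_def L_def f_def u_def using i1
        by (intro prod.cong) (auto simp: algebra_simps of_nat_diff)
      then show ?thesis by (simp only: prod_shift_up)
    qed
    have e2: "Gc k i = (\<Prod>t\<in>{u - l<..u - b + max b L}. f t)"
    proof -
      have "Gc k i = (\<Prod>j=1..l + max b L - b. f ((u - l) + int j))"
        unfolding Gc_def cc f_def u_def
        by (intro prod.cong) (auto simp: algebra_simps l_def)
      also have "\<dots> = (\<Prod>t\<in>{u - l<..u - l + int (l + max b L - b)}. f t)" by (rule prod_shift_up)
      also have "u - l + int (l + max b L - b) = u - b + max b L" by (simp add: max_def)
      finally show ?thesis .
    qed
    have e3: "T1 k i = (\<Prod>t\<in>{u - b<..u - b + L}. f t)"
    proof -
      have "sgn_idx m (m - a + i) = 1" using i1 assms(4) by (simp add: sgn_idx_def)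
      then have "T1 k i = (\<Prod>j=1..L. f ((u - b) + int j))"
        unfolding T1_def L_def f_def u_def
        by (intro prod.cong) (auto simp: algebra_simps)
      then show ?thesis by (simp only: prod_shift_up)
    qed
    have e4: "T2 k i = (\<Prod>t\<in>{u - l<..u}. f t)"
    proof -
      have "sgn_idx m (m + 1) = -1" by (simp add: sgn_idx_def)
      then have "T2 k i = (\<Prod>j=1..l. f ((u + 1) - int j))"
        unfolding T2_def l_def f_def u_def
        by (intro prod.cong) (auto simp: algebra_simps)
      also have "\<dots> = (\<Prod>t\<in>{u + 1 - int l - 1<..u + 1 - 1}. f t)" by (rule prod_shift_down)
      finally show ?thesis by simp
    qed
    show ?thesis unfolding e1 e2 e3 e4 by (rule key)
  qed
  have "pi_poly m h p lam z a b x * (\<Prod>j=1..a. shift h (calT m h p lam z a b j) (int j) x)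
      = (\<Prod>k=1..p. \<Prod>i=1..a. Fp k (a + 1 - i) * Gc k i)"
    unfolding pi2 cE by (simp add: prod.distrib)
  also have "\<dots> = (\<Prod>k=1..p. \<Prod>i=1..a. T1 k i * T2 k i)"
    using per by (intro prod.cong refl) auto
  finally show "pi_poly m h p lam z a b x * (\<Prod>j=1..a. shift h (calT m h p lam z a b j) (int j) x)
           = (\<Prod>i=1..a. shift h (T_poly m h p lam z (m - a + i)) (int (b + i)) x *
                        shift h (T_poly m h p lam z (m + 1)) (int i - 1) x)"
    unfolding rE .
qed

end
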